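(* Let $D\ge1$, let $Q_D$ be the $D$-dimensional hypercube on $X=\{0,1\}^D$ with adjacency matrix $A$. Fix $x\in X$ and let $B$ be a symmetric $A$-like matrix such that $B_{xy}=0$ for all $y\in X$. Then $B=0$.
   Context: $Q_D$ is the graph with vertex set $X=\{0,1\}^D$, two vertices adjacent iff they differ in exactly one coordinate. Matrices are real with rows and columns indexed by $X$. A matrix $B$ is $A$-like if $BA=AB$ and $B_{xy}=0$ for all $x,y\in X$ that are neither equal nor adjacent. *)

theory Defs
  imports "HOL-Analysis.Analysis"
begin

definition cube :: "nat \<Rightarrow> bool list set" where
  "cube D = {xs. length xs = D}"

definition hdist :: "bool list \<Rightarrow> bool list \<Rightarrow> nat" where
  "hdist xs ys = card {i. i < length xs \<and> xs ! i \<noteq> ys ! i}"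

definition adj :: "bool list \<Rightarrow> bool list \<Rightarrow> bool" where
  "adj xs ys \<longleftrightarrow> length xs = length ys \<and> hdist xs ys = 1"

text \<open>Real matrices indexed by X, represented as functions; only entries on X matter.\<close>
definition adjmat :: "bool list \<Rightarrow> bool list \<Rightarrow> real" where
  "adjmat x y = (if adj x y then 1 else 0)"

definition matmul :: "nat \<Rightarrow> (bool list \<Rightarrow> bool list \<Rightarrow> real) \<Rightarrow> (bool list \<Rightarrow> bool list \<Rightarrow> real)
    \<Rightarrow> bool list \<Rightarrow> bool list \<Rightarrow> real" where
  "matmul D M N x y = (\<Sum>z\<in>cube D. M x z * N z y)"

definition A_like :: "nat \<Rightarrow> (bool list \<Rightarrow> bool list \<Rightarrow> real) \<Rightarrow> bool" where
  "A_like D B \<longleftrightarrow>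
     (\<forall>x\<in>cube D. \<forall>y\<in>cube D. matmul D B adjmat x y = matmul D adjmat B x y) \<and>
     (\<forall>x\<in>cube D. \<forall>y\<in>cube D. x \<noteq> y \<and> \<not> adj x y \<longrightarrow> B x y = 0)"

end

theory Submission
  imports Defs
begin

definition flip :: "nat \<Rightarrow> bool list \<Rightarrow> bool list" where
  "flip k u = u[k := \<not> u ! k]"

definition dset :: "bool list \<Rightarrow> bool list \<Rightarrow> nat set" where
  "dset u v = {k. k < length u \<and> u ! k \<noteq> v ! k}"

definition tog :: "nat \<Rightarrow> nat set \<Rightarrow> nat set" where
  "tog k S = (if k \<in> S then S - {k} else insert k S)"

lemma length_flip[simp]: "length (flip k u) = length u"
  by (simp add: flip_def)

lemma nth_flip: "flip k u ! m = (if m = k \<and> k < length u then \<not> u ! k else u ! m)"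
  by (cases "k < length u") (auto simp: flip_def nth_list_update list_update_beyond)

lemma flip_flip[simp]: "flip k (flip k u) = u"
  by (rule nth_equalityI) (auto simp: nth_flip)

lemma flip_cube: "u \<in> cube D \<Longrightarrow> flip k u \<in> cube D"
  by (simp add: cube_def)

lemma dset_flip_l: "k < length u \<Longrightarrow> length u = length v \<Longrightarrow> dset (flip k u) v = tog k (dset u v)"
  by (auto simp: dset_def tog_def nth_flip)

lemma dset_flip_r: "k < length u \<Longrightarrow> length u = length v \<Longrightarrow> dset u (flip k v) = tog k (dset u v)"
  by (auto simp: dset_def tog_def nth_flip)

lemma dset_self[simp]: "dset u u = {}"
  by (simp add: dset_def)

lemma dset_empty: "length u = length v \<Longrightarrow> dset u v = {} \<Longrightarrow> u = v"
  by (rule nth_equalityI) (auto simp: dset_def)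

lemma hdist_dset: "hdist u v = card (dset u v)"
  by (simp add: hdist_def dset_def)

lemma adj_iff: "adj u v \<longleftrightarrow> length u = length v \<and> (\<exists>k. dset u v = {k})"
  by (simp add: adj_def hdist_dset card_1_singleton_iff)

lemma adj_flip_form:
  assumes "adj u v" shows "\<exists>k<length u. v = flip k u"
proof -
  from assms obtain k where l: "length u = length v" and k: "dset u v = {k}" by (auto simp: adj_iff)
  then have kl: "k < length u" by (auto simp: dset_def)
  have "dset (flip k u) v = {}" using dset_flip_l[OF kl l] k by (simp add: tog_def)
  then have "flip k u = v" using l by (intro dset_empty) auto
  with kl show ?thesis by auto
qed

lemma finite_cube: "finite (cube D)"
proof -
  have "cube D = {xs. set xs \<subseteq> UNIV \<and> length xs = D}" by (auto simp: cube_def)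
  then show ?thesis using finite_lists_length_eq[of "UNIV::bool set" D] by simp
qed

lemma sum_two:
  assumes "a \<in> cube D" "b \<in> cube D" "a \<noteq> b" "\<And>z. z \<in> cube D \<Longrightarrow> z \<noteq> a \<Longrightarrow> z \<noteq> b \<Longrightarrow> f z = 0"
  shows "sum f (cube D) = f a + f b"
proof -
  have "sum f {a,b} = sum f (cube D)"
    using assms by (intro sum.mono_neutral_left finite_cube) auto
  then show ?thesis using assms(3) by simp
qed

lemma sum_one:
  assumes "a \<in> cube D" "\<And>z. z \<in> cube D \<Longrightarrow> z \<noteq> a \<Longrightarrow> f z = 0"
  shows "sum f (cube D) = f a"
proof -
  have "sum f {a} = sum f (cube D)"
    using assms by (intro sum.mono_neutral_left finite_cube) auto
  then show ?thesis by simp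
qed

lemma connect:
  assumes "x \<in> cube D" "P x" "\<And>y i. y \<in> cube D \<Longrightarrow> i < D \<Longrightarrow> P y \<Longrightarrow> P (flip i y)"
  shows "y \<in> cube D \<Longrightarrow> P y"
proof (induction "card (dset y x)" arbitrary: y)
  case 0
  have "finite (dset y x)" by (simp add: dset_def)
  with 0 have "dset y x = {}" by simp
  then have "y = x" using 0 assms(1) by (intro dset_empty) (auto simp: cube_def)
  then show ?case using assms by simp
next
  case (Suc n)
  then obtain i where i: "i \<in> dset y x" by fastforce
  have fin: "finite (dset y x)" by (simp add: dset_def)
  have il: "i < D" using i Suc.prems by (auto simp: dset_def cube_def)
  have len: "length y = length x" using Suc.prems assms(1) by (simp add: cube_def)
  have "dset (flip i y) x = dset y x - {i}"
    using dset_flip_l[of i y x] i il len Suc.prems by (auto simp: tog_def cube_def)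
  then have "card (dset (flip i y) x) = n" using Suc.hyps(2) i fin by simp
  then have "P (flip i y)" using Suc.hyps(1) Suc.prems flip_cube by blast
  then have "P (flip i (flip i y))" using assms(3) Suc.prems il flip_cube by blast
  then show ?case by simp
qed

lemma dset_ff: "k < length u \<Longrightarrow> i < length u \<Longrightarrow> dset (flip k u) (flip i u) = tog k (tog i {})"
  by (simp add: dset_flip_l dset_flip_r) (auto simp: tog_def)

lemma dset_fff: "k < length u \<Longrightarrow> i < length u \<Longrightarrow> j < length u \<Longrightarrow>
   dset (flip k u) (flip i (flip j u)) = tog k (tog i (tog j {}))"
  by (simp add: dset_flip_l dset_flip_r) (auto simp: tog_def)

lemma dset_uff: "i < length u \<Longrightarrow> j < length u \<Longrightarrow>
   dset u (flip i (flip j u)) = tog i (tog j {})"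
  by (simp add: dset_flip_r)

lemma adj_u_fi: "i < length u \<Longrightarrow> adj u (flip i u)"
  using dset_flip_r[of i u u] by (simp add: adj_iff tog_def)

lemma not_adj_fk_fi: "k < length u \<Longrightarrow> i < length u \<Longrightarrow> \<not> adj (flip k u) (flip i u)"
  unfolding adj_iff using dset_ff[of k u i] by (auto simp: tog_def split: if_splits)

lemma not_adj_u_fifj: "i < length u \<Longrightarrow> j < length u \<Longrightarrow> i \<noteq> j \<Longrightarrow> \<not> adj u (flip i (flip j u))"
  unfolding adj_iff using dset_uff[of i u j] by (auto simp: tog_def doubleton_eq_iff)

lemma adj_fk_fifj: "k < length u \<Longrightarrow> i < length u \<Longrightarrow> j < length u \<Longrightarrow> i \<noteq> j \<Longrightarrow>
   adj (flip k u) (flip i (flip j u)) \<longleftrightarrow> k = i \<or> k = j"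
  unfolding adj_iff using dset_fff[of k u i j] by (auto simp: tog_def doubleton_eq_iff insert_Diff_if)

lemma flip_neq: "i < length u \<Longrightarrow> flip i u \<noteq> u"
  by (metis adj_u_fi adj_iff dset_self empty_not_insert)

lemma flip_neq2: "i < length u \<Longrightarrow> j < length u \<Longrightarrow> i \<noteq> j \<Longrightarrow> flip i u \<noteq> flip j u"
  using dset_ff[of i u j] by (auto simp: tog_def)

lemma flip_comm: "flip i (flip j u) = flip j (flip i u)"
  by (rule nth_equalityI) (auto simp: nth_flip)

lemma Bzero: "A_like D B \<Longrightarrow> z \<in> cube D \<Longrightarrow> w \<in> cube D \<Longrightarrow> z \<noteq> w \<Longrightarrow> \<not> adj z w \<Longrightarrow> B z w = 0"
  by (simp add: A_like_def)

lemma diag_step: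
  assumes AL: "A_like D B" and u: "u \<in> cube D" and i: "i < D"
  shows "B u u = B (flip i u) (flip i u)"
proof -
  have lu: "length u = D" using u by (simp add: cube_def)
  have fu: "flip i u \<in> cube D" using u by (rule flip_cube)
  have "matmul D B adjmat u (flip i u) = B u u"
    unfolding matmul_def
  proof (subst sum_one[OF u])
    fix z assume z: "z \<in> cube D" "z \<noteq> u"
    show "B u z * adjmat z (flip i u) = 0"
    proof (cases "adj u z")
      case True
      then obtain k where k: "k < D" "z = flip k u" using adj_flip_form lu by blast
      then show ?thesis using not_adj_fk_fi[of k u i] i lu by (simp add: adjmat_def)
    next
      case False
      then show ?thesis using Bzero[OF AL u z(1)] z by simp
    qed
  qed (simp add: adjmat_def adj_u_fi i lu)
  moreover have "matmul D adjmat B u (flip i u) = B (flip i u) (flip i u)"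
    unfolding matmul_def
  proof (subst sum_one[OF fu])
    fix z assume z: "z \<in> cube D" "z \<noteq> flip i u"
    show "adjmat u z * B z (flip i u) = 0"
    proof (cases "adj u z")
      case True
      then obtain k where k: "k < D" "z = flip k u" using adj_flip_form lu by blast
      then have "B z (flip i u) = 0" using Bzero[OF AL z(1) fu] z not_adj_fk_fi[of k u i] i lu by simp
      then show ?thesis by simp
    next
      case False
      then show ?thesis by (simp add: adjmat_def)
    qed
  qed (simp add: adjmat_def adj_u_fi i lu)
  moreover have "matmul D B adjmat u (flip i u) = matmul D adjmat B u (flip i u)"
    using AL u fu by (simp add: A_like_def)
  ultimately show ?thesis by simp
qed

lemma sq_step:
  assumes AL: "A_like D B" and u: "u \<in> cube D" and i: "i < D" and j: "j < D" and ij: "i \<noteq> j"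
  shows "B u (flip i u) + B u (flip j u) = B (flip i u) (flip i (flip j u)) + B (flip j u) (flip i (flip j u))"
proof -
  define w where "w = flip i (flip j u)"
  have lu: "length u = D" using u by (simp add: cube_def)
  have fi: "flip i u \<in> cube D" and fj: "flip j u \<in> cube D" using u by (simp_all add: flip_cube)
  have wc: "w \<in> cube D" using u by (simp add: w_def flip_cube)
  have nij: "flip i u \<noteq> flip j u" using flip_neq2 i j ij lu by simp
  have nuw: "\<not> adj u w" using not_adj_u_fifj i j ij lu by (simp add: w_def)
  have aiw: "adj (flip i u) w" "adj (flip j u) w" using adj_fk_fifj[of _ u i j] i j ij lu by (simp_all add: w_def)
  have "matmul D B adjmat u w = B u (flip i u) + B u (flip j u)"
    unfolding matmul_def
  proof (subst sum_two[OF fi fj nij])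
    fix z assume z: "z \<in> cube D" "z \<noteq> flip i u" "z \<noteq> flip j u"
    show "B u z * adjmat z w = 0"
    proof (cases "adj u z")
      case True
      then obtain k where k: "k < D" "z = flip k u" using adj_flip_form lu by blast
      then have "k \<noteq> i" "k \<noteq> j" using z by auto
      then show ?thesis using k adj_fk_fifj[of k u i j] i j ij lu by (simp add: adjmat_def w_def)
    next
      case False
      then show ?thesis using Bzero[OF AL u z(1)] z nuw by (cases "z = u") (auto simp: adjmat_def)
    qed
  qed (simp add: adjmat_def aiw)
  moreover have "matmul D adjmat B u w = B (flip i u) w + B (flip j u) w"
    unfolding matmul_def
  proof (subst sum_two[OF fi fj nij])
    fix z assume z: "z \<in> cube D" "z \<noteq> flip i u" "z \<noteq> flip j u"
    show "adjmat u z * B z w = 0"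
    proof (cases "adj u z")
      case True
      then obtain k where k: "k < D" "z = flip k u" using adj_flip_form lu by blast
      then have "k \<noteq> i" "k \<noteq> j" using z by auto
      then have "\<not> adj z w" using k adj_fk_fifj[of k u i j] i j ij lu by (simp add: w_def)
      moreover have "z \<noteq> w" using True nuw by auto
      ultimately show ?thesis using Bzero[OF AL z(1) wc] by simp
    next
      case False
      then show ?thesis by (simp add: adjmat_def)
    qed
  qed (simp add: adjmat_def adj_u_fi i j lu)
  moreover have "matmul D B adjmat u w = matmul D adjmat B u w"
    using AL u wc by (simp add: A_like_def)
  ultimately show ?thesis by (simp add: w_def)
qed

theorem lemma8p3:
  fixes D :: nat and x :: "bool list" and B :: "bool list \<Rightarrow> bool list \<Rightarrow> real"
  assumes "D \<ge> 1"
    and "x \<in> cube D"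
    and "\<forall>y\<in>cube D. \<forall>z\<in>cube D. B y z = B z y"
    and "A_like D B"
    and "\<forall>y\<in>cube D. B x y = 0"
  shows "\<forall>y\<in>cube D. \<forall>z\<in>cube D. B y z = 0"
proof (intro ballI)
  fix y z assume y: "y \<in> cube D" and z: "z \<in> cube D"
  note AL = assms(4)
  have diag: "B v v = 0" if v: "v \<in> cube D" for v
  proof (rule connect[OF assms(2), of "\<lambda>v. B v v = 0"])
    show "B x x = 0" using assms(2,5) by blast
    fix v i assume "v \<in> cube D" "i < D" "B v v = 0"
    then show "B (flip i v) (flip i v) = 0" using diag_step[OF AL] by metis
  qed (rule v)
  have edge: "B v (flip k v) = 0" if v: "v \<in> cube D" and k: "k < D" for v k
  proof (rule connect[OF assms(2), of "\<lambda>v. B v (flip k v) = 0"])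
    show "B x (flip k x) = 0" using assms(2,5) flip_cube by blast
    fix v j assume v: "v \<in> cube D" and j: "j < D" and h: "B v (flip k v) = 0"
    show "B (flip j v) (flip k (flip j v)) = 0"
    proof (cases "j = k")
      case True
      then show ?thesis using h assms(3) v flip_cube by (metis flip_flip)
    next
      case False
      have fkv: "flip k v \<in> cube D" using v by (rule flip_cube)
      have s1: "B v (flip k v) + B v (flip j v) = B (flip k v) (flip k (flip j v)) + B (flip j v) (flip k (flip j v))"
        using sq_step[OF AL v k j] False by simp
      have s2: "B (flip k v) (flip k (flip k v)) + B (flip k v) (flip j (flip k v))
          = B (flip k (flip k v)) (flip k (flip j (flip k v))) + B (flip j (flip k v)) (flip k (flip j (flip k v)))"
        using sq_step[OF AL fkv k j] False by simp
      have e1: "flip j (flip k v) = flip k (flip j v)" by (rule flip_comm)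
      have e2: "flip k (flip j (flip k v)) = flip j v" by (simp add: e1)
      have s2': "B (flip k v) v + B (flip k v) (flip k (flip j v)) = B v (flip j v) + B (flip k (flip j v)) (flip j v)"
        using s2 by (simp only: e1 e2 flip_flip)
      have sy1: "B (flip k v) v = B v (flip k v)" using assms(3) v fkv by blast
      have sy2: "B (flip k (flip j v)) (flip j v) = B (flip j v) (flip k (flip j v))"
        using assms(3) v flip_cube by blast
      show ?thesis using s1 s2' sy1 sy2 h by linarith
    qed
  qed (rule v)
  show "B y z = 0"
  proof (cases "y = z")
    case True then show ?thesis using diag y by simp
  next
    case False
    show ?thesis
    proof (cases "adj y z")
      case True
      then obtain k where "k < length y" "z = flip k y" using adj_flip_form by blast
      then show ?thesis using edge y by (simp add: cube_def)
    next
      case False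
      then show ?thesis using Bzero[OF AL y z] \<open>y \<noteq> z\<close> by simp
    qed
  qed
qed

end
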